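(* For any suitable parameters $(m,q,d,\tau)$, the shifted projection protocol $\Pi$ is informative: for every terminal execution $(H,\rho)$ of $\Pi$ and every agent $P$, there is no execution $(H',\rho)$ of $\Pi$ with $H'\ne H$ and $H'_P=H_P$.
   Context: Agents $\mathcal A=\{A,B_1,\dots,B_m\}$ speak in the order $A,B_1,\dots,B_m$. A distribution type is a vector $\tau=(\tau_P)_{P\in\mathcal A}$ of positive integers, $|\tau|=\sum_P\tau_P$; the deck $\Omega$ has $|\tau|$ cards; a deal of type $\tau$ is a partition $H=(H_P)_P$ of $\Omega$ with $|H_P|=\tau_P$. Suitable parameters: $m>1$, $q>m$ a prime power, $d>0$, $|\tau|=q^{d+1}$, $\tau_A=q^{d+1}-q^d$, $\tau_{B_k}>q^{d-1}$ for each $k\in[1,m]$. A transversal hyperplane $V\subseteq\mathbb F_q^{d+1}$ is $\{x: x_{d+1}=a_1x_1+\dots+a_dx_d+b\}$; $\sigma(V)=(a_1,\dots,a_d)$; $\pi$ projects $\mathbb F_q^{d+1}$ onto the first $d$ coordinates; $\pi^V_\downarrow(w)=\pi(w)+\sigma(V)$ for $w\in V$. Shifted projection protocol (tokens: maps $\Omega\to\mathbb F_q^{d+1}$ and subsets of $\mathbb F_q^d$; runs are finite token sequences, $\rho*a$ appends $a$): the maximal executions for deal $H$ are $(H,f,X_1,\dots,X_m)$ with $f:\Omega\to\mathbb F_q^{d+1}$ a bijection such that $V=\mathbb F_q^{d+1}\setminus f[H_A]$ is a transversal hyperplane and $X_k=\pi^V_\downarrow[f[H_{B_k}]]$ for each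 $k$. $\Pi(H,\rho)$ is the set of tokens $a$ such that $(H,\rho*a)$ is an initial segment of a maximal execution. An execution is $(H,a_0,\dots,a_n)$ with $a_k\in\Pi(H,a_0,\dots,a_{k-1})$ for all $k$; it is terminal if $\Pi(H,\rho)=\emptyset$. *)

theory Defs
  imports Main
begin

text \<open>Agents are natural numbers: 0 is A, k (1 \<le> k \<le> m) is B_k.
  The deck \<Omega> is the universe of a finite type 'c.
  Vectors of F_q^n are lists of length n over a finite field 'f;
  coordinate x_i is x ! (i-1).\<close>

definition vecs :: "nat \<Rightarrow> 'f list set" where
  "vecs n = {x. length x = n}"

definition tau_total :: "nat \<Rightarrow> (nat \<Rightarrow> nat) \<Rightarrow> nat" where
  "tau_total m \<tau> = (\<Sum>P\<le>m. \<tau> P)"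

definition is_deal :: "nat \<Rightarrow> (nat \<Rightarrow> nat) \<Rightarrow> (nat \<Rightarrow> 'c set) \<Rightarrow> bool" where
  "is_deal m \<tau> H \<longleftrightarrow>
     (\<forall>P\<le>m. card (H P) = \<tau> P) \<and>
     (\<Union>P\<le>m. H P) = UNIV \<and>
     (\<forall>P\<le>m. \<forall>Q\<le>m. P \<noteq> Q \<longrightarrow> H P \<inter> H Q = {}) \<and>
     (\<forall>P. m < P \<longrightarrow> H P = {})"

definition hyperplane :: "nat \<Rightarrow> 'f::field list \<Rightarrow> 'f \<Rightarrow> 'f list set" where
  "hyperplane d a b = {x \<in> vecs (Suc d). x ! d = (\<Sum>i<d. a ! i * x ! i) + b}"

definition transversal :: "nat \<Rightarrow> 'f::field list set \<Rightarrow> bool" where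
  "transversal d V \<longleftrightarrow> (\<exists>a b. length a = d \<and> V = hyperplane d a b)"

definition sigma :: "nat \<Rightarrow> 'f::field list set \<Rightarrow> 'f list" where
  "sigma d V = (THE a. length a = d \<and> (\<exists>b. V = hyperplane d a b))"

definition proj :: "nat \<Rightarrow> 'f list \<Rightarrow> 'f list" where
  "proj d w = take d w"

definition shift_proj :: "nat \<Rightarrow> 'f::field list set \<Rightarrow> 'f list \<Rightarrow> 'f list" where
  "shift_proj d V w = map2 (+) (proj d w) (sigma d V)"

datatype ('c, 'f) token = MapTok "'c \<Rightarrow> 'f list" | SetTok "'f list set"

definition max_exec :: "nat \<Rightarrow> nat \<Rightarrow> (nat \<Rightarrow> nat) \<Rightarrow> (nat \<Rightarrow> 'c set)
    \<Rightarrow> ('c, 'f::field) token list \<Rightarrow> bool" where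
  "max_exec m d \<tau> H \<rho> \<longleftrightarrow> is_deal m \<tau> H \<and>
     (\<exists>f X. bij_betw f UNIV (vecs (Suc d)) \<and>
        transversal d (vecs (Suc d) - f ` H 0) \<and>
        (\<forall>k\<in>{1..m}. X k = shift_proj d (vecs (Suc d) - f ` H 0) ` f ` H k) \<and>
        \<rho> = MapTok f # map (\<lambda>k. SetTok (X k)) [1..<Suc m])"

definition Pi :: "nat \<Rightarrow> nat \<Rightarrow> (nat \<Rightarrow> nat) \<Rightarrow> (nat \<Rightarrow> 'c set)
    \<Rightarrow> ('c, 'f::field) token list \<Rightarrow> ('c, 'f) token set" where
  "Pi m d \<tau> H \<rho> = {a. \<exists>\<rho>'. max_exec m d \<tau> H (\<rho> @ [a] @ \<rho>')}"

definition execution :: "nat \<Rightarrow> nat \<Rightarrow> (nat \<Rightarrow> nat) \<Rightarrow> (nat \<Rightarrow> 'c set)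
    \<Rightarrow> ('c, 'f::field) token list \<Rightarrow> bool" where
  "execution m d \<tau> H \<rho> \<longleftrightarrow> is_deal m \<tau> H \<and>
     (\<forall>k<length \<rho>. \<rho> ! k \<in> Pi m d \<tau> H (take k \<rho>))"

definition terminal :: "nat \<Rightarrow> nat \<Rightarrow> (nat \<Rightarrow> nat) \<Rightarrow> (nat \<Rightarrow> 'c set)
    \<Rightarrow> ('c, 'f::field) token list \<Rightarrow> bool" where
  "terminal m d \<tau> H \<rho> \<longleftrightarrow> execution m d \<tau> H \<rho> \<and> Pi m d \<tau> H \<rho> = {}"

definition suitable :: "nat \<Rightarrow> nat \<Rightarrow> nat \<Rightarrow> (nat \<Rightarrow> nat) \<Rightarrow> bool" where
  "suitable m q d \<tau> \<longleftrightarrow> 1 < m \<and> m < q \<and> 0 < d \<and>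
     (\<forall>P\<le>m. 0 < \<tau> P) \<and>
     tau_total m \<tau> = q ^ (d + 1) \<and>
     \<tau> 0 = q ^ (d + 1) - q ^ d \<and>
     (\<forall>k\<in>{1..m}. q ^ (d - 1) < \<tau> k)"

end

theory Submission imports Defs begin

lemma finite_vecs: "finite (vecs n :: 'f::finite list set)"
  unfolding vecs_def using finite_lists_length_eq[of "UNIV::'f set" n] by simp

lemma card_vecs: "card (vecs n :: 'f::finite list set) = card (UNIV::'f set)^n"
  unfolding vecs_def using card_lists_length_eq[of "UNIV::'f set" n] by simp

lemma hyp_sub: "hyperplane d a b \<subseteq> vecs (Suc d)"
  unfolding hyperplane_def by auto

lemma hyp_take_inj: "inj_on (take d) (hyperplane d a b)"
proof (rule inj_onI)
  fix x y assume x: "x \<in> hyperplane d a b" and y: "y \<in> hyperplane d a b" and e: "take d x = take d y"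
  have lx: "length x = Suc d" and ly: "length y = Suc d" using x y by (auto simp: hyperplane_def vecs_def)
  have lt: "\<And>i. i < d \<Longrightarrow> x ! i = y ! i"
  proof -
    fix i assume "i < d"
    then have "x ! i = take d x ! i" "y ! i = take d y ! i" by simp_all
    then show "x ! i = y ! i" using e by simp
  qed
  have "(\<Sum>i<d. a ! i * x ! i) = (\<Sum>i<d. a ! i * y ! i)" using lt by simp
  hence xd: "x ! d = y ! d" using x y by (simp add: hyperplane_def)
  show "x = y"
  proof (rule nth_equalityI)
    show "length x = length y" using lx ly by simp
    fix i assume "i < length x"
    then have "i < d \<or> i = d" using lx by linarith
    then show "x ! i = y ! i" using lt xd by blast
  qed
qed

lemma hyp_take_image: "take d ` hyperplane d a b = vecs d"
proof
  show "take d ` hyperplane d a b \<subseteq> vecs d" by (auto simp: hyperplane_def vecs_def)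
  show "vecs d \<subseteq> take d ` hyperplane d a b"
  proof
    fix y :: "'a list" assume y: "y \<in> vecs d"
    hence ly: "length y = d" by (simp add: vecs_def)
    let ?x = "y @ [(\<Sum>i<d. a ! i * y ! i) + b]"
    have xi: "\<And>i. i < d \<Longrightarrow> ?x ! i = y ! i" using ly by (simp add: nth_append)
    have "(\<Sum>i<d. a ! i * ?x ! i) = (\<Sum>i<d. a ! i * y ! i)"
      by (rule sum.cong[OF refl]) (simp add: xi)
    moreover have "?x ! d = (\<Sum>i<d. a ! i * y ! i) + b" using ly by (simp add: nth_append)
    moreover have "length ?x = Suc d" using ly by simp
    ultimately have xh: "?x \<in> hyperplane d a b" unfolding hyperplane_def vecs_def by simp
    have "y = take d ?x" using ly by simp
    from this xh show "y \<in> take d ` hyperplane d a b" by (rule image_eqI)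
  qed
qed

lemma card_hyp: "card (hyperplane d a b :: 'f::{field,finite} list set) = card (UNIV::'f set)^d"
proof -
  have "card (hyperplane d a b :: 'f list set) = card (take d ` (hyperplane d a b :: 'f list set))"
    using card_image[OF hyp_take_inj[of d a b]] by simp
  also have "\<dots> = card (vecs d :: 'f list set)" using hyp_take_image[of d a b] by simp
  also have "\<dots> = card (UNIV::'f set)^d" by (rule card_vecs)
  finally show ?thesis .
qed

lemma card_field: "2 \<le> card (UNIV::'f::{field,finite} set)"
proof -
  have "card {0::'f, 1} = 2" by (simp add: card_insert_if)
  moreover have "card {0::'f, 1} \<le> card (UNIV::'f set)" by (rule card_mono) (simp_all)
  ultimately show ?thesis by linarith
qed


lemma del_nth:
  assumes "i < d" "d \<le> length x" "j < d" "j \<noteq> i"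
  shows "x ! j = (take i x @ drop (Suc i) (take d x)) ! (if j < i then j else j - 1)"
proof (cases "j < i")
  case True
  then show ?thesis using assms by (simp add: nth_append)
next
  case False
  then have "i < j" using assms by simp
  have "\<not> (j - 1 < i)" "Suc i + (j - 1 - i) = j" using \<open>i < j\<close> by simp_all
  then show ?thesis using assms \<open>i < j\<close> by (simp add: nth_append min_def)
qed

lemma lin_aux:
  fixes p :: "'a::ab_group_add"
  assumes "p + r + b = p' + r' + b'" "q + r + b = q' + r' + b'"
  shows "p - q = p' - q'"
proof -
  have "p - q = (p + r + b) - (q + r + b)" by (simp add: algebra_simps)
  also have "\<dots> = (p' + r' + b') - (q' + r' + b')" using assms by simp
  also have "\<dots> = p' - q'" by (simp add: algebra_simps)
  finally show ?thesis .
qed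

lemma hyp_inter:
  fixes a a' :: "'f::{field,finite} list"
  assumes la: "length a = d" and la': "length a' = d" and ne: "(a, b) \<noteq> (a', b')" and d: "0 < d"
  shows "card (hyperplane d a b \<inter> hyperplane d a' b') \<le> card (UNIV::'f set)^(d-1)"
proof (cases "a = a'")
  case True
  then have "b \<noteq> b'" using ne by simp
  then have "hyperplane d a b \<inter> hyperplane d a' b' = {}"
    using True by (auto simp: hyperplane_def)
  then show ?thesis by simp
next
  case False
  then obtain i where i: "i < d" "a ! i \<noteq> a' ! i"
    using la la' nth_equalityI by metis
  define g :: "'f list \<Rightarrow> 'f list" where "g x = take i x @ drop (Suc i) (take d x)" for x
  let ?I = "hyperplane d a b \<inter> hyperplane d a' b'"
  have gim: "g ` ?I \<subseteq> vecs (d - 1)"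
    using i by (auto simp: g_def hyperplane_def vecs_def)
  have ginj: "inj_on g ?I"
  proof (rule inj_onI)
    fix x y assume x: "x \<in> ?I" and y: "y \<in> ?I" and e: "g x = g y"
    have lx: "length x = Suc d" and ly: "length y = Suc d" using x y by (auto simp: hyperplane_def vecs_def)
    have oth: "x ! j = y ! j" if "j < d" "j \<noteq> i" for j
    proof -
      have "x ! j = g x ! (if j < i then j else j - 1)"
        unfolding g_def using del_nth[OF i(1) _ that, of x] lx by simp
      also have "\<dots> = g y ! (if j < i then j else j - 1)" using e by simp
      also have "\<dots> = y ! j"
        unfolding g_def using del_nth[OF i(1) _ that, of y] ly by simp
      finally show ?thesis .
    qed
    let ?R = "{..<d} - {i}"
    have sx: "(\<Sum>j<d. a ! j * x ! j) + b = (\<Sum>j<d. a' ! j * x ! j) + b'"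
    proof -
      have h1: "x ! d = (\<Sum>j<d. a ! j * x ! j) + b" and h2: "x ! d = (\<Sum>j<d. a' ! j * x ! j) + b'"
        using x by (auto simp: hyperplane_def)
      from h1 h2 show ?thesis by (rule trans[OF sym])
    qed
    have sy: "(\<Sum>j<d. a ! j * y ! j) + b = (\<Sum>j<d. a' ! j * y ! j) + b'"
    proof -
      have h1: "y ! d = (\<Sum>j<d. a ! j * y ! j) + b" and h2: "y ! d = (\<Sum>j<d. a' ! j * y ! j) + b'"
        using y by (auto simp: hyperplane_def)
      from h1 h2 show ?thesis by (rule trans[OF sym])
    qed
    have split: "(\<Sum>j<d. c ! j * z ! j) = c ! i * z ! i + (\<Sum>j\<in>?R. c ! j * z ! j)" for c z :: "'f list"
      using i(1) by (simp add: sum.remove)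
    have r1: "(\<Sum>j\<in>?R. a ! j * x ! j) = (\<Sum>j\<in>?R. a ! j * y ! j)"
      by (rule sum.cong[OF refl]) (simp add: oth)
    have r2: "(\<Sum>j\<in>?R. a' ! j * x ! j) = (\<Sum>j\<in>?R. a' ! j * y ! j)"
      by (rule sum.cong[OF refl]) (simp add: oth)
    have "a ! i * x ! i - a ! i * y ! i = a' ! i * x ! i - a' ! i * y ! i"
    proof (rule lin_aux)
      show "a ! i * x ! i + (\<Sum>j\<in>?R. a ! j * y ! j) + b = a' ! i * x ! i + (\<Sum>j\<in>?R. a' ! j * y ! j) + b'"
        using sx by (simp only: split[of a] split[of a'] r1 r2)
      show "a ! i * y ! i + (\<Sum>j\<in>?R. a ! j * y ! j) + b = a' ! i * y ! i + (\<Sum>j\<in>?R. a' ! j * y ! j) + b'"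
        using sy by (simp only: split[of a] split[of a'])
    qed
    then have "(a ! i - a' ! i) * (x ! i - y ! i) = 0" by (simp add: algebra_simps)
    then have xi: "x ! i = y ! i" using i(2) by simp
    have all: "x ! j = y ! j" if "j < d" for j using oth xi that by (cases "j = i") auto
    have "(\<Sum>j<d. a ! j * x ! j) = (\<Sum>j<d. a ! j * y ! j)"
      by (rule sum.cong[OF refl]) (simp add: all)
    then have xd: "x ! d = y ! d" using x y by (simp add: hyperplane_def)
    show "x = y"
    proof (rule nth_equalityI)
      show "length x = length y" using lx ly by simp
      fix j assume "j < length x"
      then have "j < d \<or> j = d" using lx by linarith
      then show "x ! j = y ! j" using all xd by blast
    qed
  qed
  have "card ?I \<le> card (vecs (d - 1) :: 'f list set)"
    by (rule card_inj_on_le[OF ginj gim finite_vecs])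
  then show ?thesis by (simp add: card_vecs)
qed


lemma hyp_unique:
  fixes a a' :: "'f::{field,finite} list"
  assumes "length a = d" "length a' = d" "0 < d" "hyperplane d a b = hyperplane d a' b'"
  shows "a = a' \<and> b = b'"
proof (rule ccontr)
  assume "\<not> (a = a' \<and> b = b')"
  then have "(a, b) \<noteq> (a', b')" by simp
  from hyp_inter[OF assms(1,2) this assms(3)] assms(4)
  have "card (UNIV::'f set) ^ d \<le> card (UNIV::'f set) ^ (d - 1)" by (simp add: card_hyp)
  moreover have "card (UNIV::'f set) ^ (d - 1) < card (UNIV::'f set) ^ d"
    using card_field[where 'f='f] assms(3) by (intro power_strict_increasing) auto
  ultimately show False by simp
qed

lemma sigma_hyp:
  fixes a :: "'f::{field,finite} list"
  assumes "length a = d" "0 < d"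
  shows "sigma d (hyperplane d a b) = a"
  unfolding sigma_def
proof (rule the_equality)
  show "length a = d \<and> (\<exists>b'. hyperplane d a b = hyperplane d a b')" using assms by auto
  fix a' assume "length a' = d \<and> (\<exists>b'. hyperplane d a b = hyperplane d a' b')"
  then obtain b' where "length a' = d" "hyperplane d a b = hyperplane d a' b'" by auto
  then show "a' = a" using hyp_unique[OF assms(1) _ assms(2)] by metis
qed

lemma shift_inj:
  fixes a :: "'f::{field,finite} list"
  assumes "length a = d" "0 < d"
  shows "inj_on (shift_proj d (hyperplane d a b)) (hyperplane d a b)"
proof (rule inj_onI)
  fix x y assume x: "x \<in> hyperplane d a b" and y: "y \<in> hyperplane d a b"
    and e: "shift_proj d (hyperplane d a b) x = shift_proj d (hyperplane d a b) y"
  have lx: "length (take d x) = d" and ly: "length (take d y) = d"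
    using x y by (auto simp: hyperplane_def vecs_def)
  have e2: "map2 (+) (take d x) a = map2 (+) (take d y) a"
    using e by (simp add: shift_proj_def proj_def sigma_hyp[OF assms])
  have "take d x = take d y"
  proof (rule nth_equalityI)
    show "length (take d x) = length (take d y)" using lx ly by simp
    fix i assume i: "i < length (take d x)"
    have "map2 (+) (take d x) a ! i = map2 (+) (take d y) a ! i" using e2 by simp
    then have "take d x ! i + a ! i = take d y ! i + a ! i"
      using i lx ly assms(1) by simp
    then show "take d x ! i = take d y ! i" by simp
  qed
  then show "x = y" using hyp_take_inj[of d a b] x y by (simp add: inj_on_def)
qed


lemma max_len: "max_exec m d \<tau> H \<rho> \<Longrightarrow> length \<rho> = Suc m"
  unfolding max_exec_def by auto

lemma exec_prefix:
  assumes "execution m d \<tau> H \<rho>" "\<rho> \<noteq> []"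
  shows "\<exists>\<rho>'. max_exec m d \<tau> H (\<rho> @ \<rho>')"
proof -
  let ?k = "length \<rho> - 1"
  have "?k < length \<rho>" using assms(2) by simp
  then have "\<rho> ! ?k \<in> Pi m d \<tau> H (take ?k \<rho>)" using assms(1) by (simp add: execution_def)
  then obtain \<rho>' where "max_exec m d \<tau> H (take ?k \<rho> @ [\<rho> ! ?k] @ \<rho>')" by (auto simp: Pi_def)
  moreover have "take ?k \<rho> @ [\<rho> ! ?k] = \<rho>"
    using assms(2) by (metis append_butlast_last_id butlast_conv_take last_conv_nth)
  ultimately have "max_exec m d \<tau> H (\<rho> @ \<rho>')" by (metis append_assoc)
  then show ?thesis by blast
qed

lemma exec_max:
  assumes "execution m d \<tau> H \<rho>" "length \<rho> = Suc m"
  shows "max_exec m d \<tau> H \<rho>"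
proof -
  have "\<rho> \<noteq> []" using assms(2) by auto
  then obtain \<rho>' where r: "max_exec m d \<tau> H (\<rho> @ \<rho>')" using exec_prefix[OF assms(1)] by blast
  from max_len[OF r] assms(2) have "\<rho>' = []" by simp
  then show ?thesis using r by simp
qed

lemma term_max:
  assumes "terminal m d \<tau> H \<rho>" "\<rho> \<noteq> []"
  shows "max_exec m d \<tau> H \<rho>"
proof -
  obtain \<rho>' where r: "max_exec m d \<tau> H (\<rho> @ \<rho>')"
  proof -
    have "execution m d \<tau> H \<rho>" using assms(1) by (simp add: terminal_def)
    from exec_prefix[OF this assms(2)] show ?thesis using that by blast
  qed
  show ?thesis
  proof (cases \<rho>')
    case Nil then show ?thesis using r by simp
  next
    case (Cons a r')
    then have "a \<in> Pi m d \<tau> H \<rho>" using r by (auto simp: Pi_def)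
    then show ?thesis using assms(1) by (simp add: terminal_def)
  qed
qed

lemma sub_V:
  assumes "is_deal m \<tau> H" "bij_betw f UNIV (vecs (Suc d))" "1 \<le> k" "k \<le> m"
  shows "f ` H k \<subseteq> vecs (Suc d) - f ` H 0"
proof -
  have "H k \<inter> H 0 = {}" using assms(1,3,4) unfolding is_deal_def by auto
  moreover have "inj f" using assms(2) by (simp add: bij_betw_def)
  moreover have "f ` UNIV = vecs (Suc d)" using assms(2) by (simp add: bij_betw_def)
  ultimately show ?thesis by (auto simp: inj_on_def)
qed


lemma exists_max:
  assumes s: "suitable m (card (UNIV :: 'f::{field,finite} set)) d \<tau>"
    and c: "card (UNIV :: 'c::finite set) = tau_total m \<tau>"
    and deal: "is_deal m \<tau> (H :: nat \<Rightarrow> 'c set)"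
  shows "\<exists>\<rho> :: ('c, 'f) token list. max_exec m d \<tau> H \<rho>"
proof -
  let ?q = "card (UNIV :: 'f set)"
  let ?V = "hyperplane d (replicate d 0) (0::'f)"
  let ?W = "vecs (Suc d) :: 'f list set"
  have cV: "card ?V = ?q ^ d" by (rule card_hyp)
  have VW: "?V \<subseteq> ?W" by (rule hyp_sub)
  have cW: "card ?W = ?q ^ Suc d" by (rule card_vecs)
  have le: "?q ^ d \<le> ?q ^ Suc d" using card_field[where 'f='f] by simp
  have cWV: "card (?W - ?V) = ?q ^ Suc d - ?q ^ d"
    using card_Diff_subset[OF finite_subset[OF VW finite_vecs] VW] cV cW by simp
  have cH0: "card (H 0) = ?q ^ Suc d - ?q ^ d" using deal s unfolding is_deal_def suitable_def by simp
  have cU: "card (UNIV :: 'c set) = ?q ^ Suc d" using c s unfolding suitable_def by simp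
  have cC: "card (- H 0) = ?q ^ d"
  proof -
    have "card (- H 0) = card (UNIV :: 'c set) - card (H 0)"
      using card_Diff_subset[of "H 0" "UNIV :: 'c set"] by (simp add: Compl_eq_Diff_UNIV)
    then show ?thesis using cU cH0 le by simp
  qed
  obtain g0 where g0: "bij_betw g0 (H 0) (?W - ?V)"
    using finite_same_card_bij[of "H 0" "?W - ?V"] cH0 cWV finite_vecs by auto
  obtain g1 where g1: "bij_betw g1 (- H 0) ?V"
    using finite_same_card_bij[of "- H 0" "?V"] cC cV finite_subset[OF VW finite_vecs] by auto
  define f where "f x = (if x \<in> H 0 then g0 x else g1 x)" for x
  have b0: "bij_betw f (H 0) (?W - ?V)" using g0 by (rule bij_betw_cong[THEN iffD1, rotated]) (simp add: f_def)
  have b1: "bij_betw f (- H 0) ?V" using g1 by (rule bij_betw_cong[THEN iffD1, rotated]) (simp add: f_def)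
  have "bij_betw f (H 0 \<union> - H 0) ((?W - ?V) \<union> ?V)" by (rule bij_betw_combine[OF b0 b1]) auto
  moreover have "H 0 \<union> - H 0 = UNIV" "(?W - ?V) \<union> ?V = ?W" using VW by auto
  ultimately have bf: "bij_betw f UNIV ?W" by simp
  have fH0: "f ` H 0 = ?W - ?V" using b0 by (simp add: bij_betw_def)
  have "?W - f ` H 0 = ?V" using fH0 VW by auto
  then have tr: "transversal d (?W - f ` H 0)" unfolding transversal_def
    by (intro exI[of _ "replicate d 0"] exI[of _ 0]) simp
  define X where "X k = shift_proj d (?W - f ` H 0) ` f ` H k" for k
  have "max_exec m d \<tau> H (MapTok f # map (\<lambda>k. SetTok (X k)) [1..<Suc m])"
    unfolding max_exec_def using deal bf tr X_def by blast
  then show ?thesis by blast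
qed


lemma core:
  fixes H H' :: "nat \<Rightarrow> 'c::finite set" and \<rho> :: "('c, 'f::{field,finite}) token list"
  assumes s: "suitable m (card (UNIV :: 'f set)) d \<tau>"
    and M: "max_exec m d \<tau> H \<rho>" and M': "max_exec m d \<tau> H' \<rho>"
    and P: "P \<le> m" and HP: "H' P = H P"
  shows "H' = H"
proof -
  let ?q = "card (UNIV :: 'f set)"
  let ?W = "vecs (Suc d) :: 'f list set"
  have d: "0 < d" and tauP: "\<forall>k\<in>{1..m}. ?q ^ (d - 1) < \<tau> k" using s by (auto simp: suitable_def)
  obtain f X where deal: "is_deal m \<tau> H" and bf: "bij_betw f UNIV ?W"
    and tr: "transversal d (?W - f ` H 0)"
    and Xd: "\<forall>k\<in>{1..m}. X k = shift_proj d (?W - f ` H 0) ` f ` H k"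
    and r: "\<rho> = MapTok f # map (\<lambda>k. SetTok (X k)) [1..<Suc m]"
    using M unfolding max_exec_def by blast
  obtain f' X' where deal': "is_deal m \<tau> H'" and bf': "bij_betw f' UNIV ?W"
    and tr': "transversal d (?W - f' ` H' 0)"
    and Xd': "\<forall>k\<in>{1..m}. X' k = shift_proj d (?W - f' ` H' 0) ` f' ` H' k"
    and r': "\<rho> = MapTok f' # map (\<lambda>k. SetTok (X' k)) [1..<Suc m]"
    using M' unfolding max_exec_def by blast
  have ff: "f' = f" using r r' by simp
  have "map (\<lambda>k. SetTok (X k)) [1..<Suc m] = map (\<lambda>k. SetTok (X' k)) [1..<Suc m]"
    using r r' by simp
  then have XX: "\<forall>k\<in>{1..m}. X' k = X k" by (auto simp: map_eq_conv)
  have injf: "inj f" using bf by (simp add: bij_betw_def)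
  have imf: "f ` UNIV = ?W" using bf by (simp add: bij_betw_def)
  obtain a b where la: "length a = d" and V: "?W - f ` H 0 = hyperplane d a b"
    using tr unfolding transversal_def by blast
  obtain a' b' where la': "length a' = d" and V': "?W - f ` H' 0 = hyperplane d a' b'"
    using tr' unfolding transversal_def ff by blast
  have VV: "?W - f ` H' 0 = ?W - f ` H 0"
  proof (cases "P = 0")
    case True then show ?thesis using HP by simp
  next
    case False
    then have P1: "P \<in> {1..m}" using P by simp
    have s1: "f ` H P \<subseteq> ?W - f ` H 0" using sub_V[OF deal bf _ P] False by simp
    have s2: "f ` H P \<subseteq> ?W - f ` H' 0" using sub_V[OF deal' bf _ P] False HP by simp
    show ?thesis
    proof (rule ccontr)
      assume ne: "?W - f ` H' 0 \<noteq> ?W - f ` H 0"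
      then have "(a, b) \<noteq> (a', b')" using V V' by auto
      then have ci: "card (hyperplane d a b \<inter> hyperplane d a' b') \<le> ?q ^ (d - 1)"
        by (rule hyp_inter[OF la la' _ d])
      have "f ` H P \<subseteq> hyperplane d a b \<inter> hyperplane d a' b'" using s1 s2 V V' by auto
      then have "card (f ` H P) \<le> card (hyperplane d a b \<inter> hyperplane d a' b')"
        by (rule card_mono[rotated]) (meson finite_subset[OF _ finite_vecs] hyp_sub inf.coboundedI1)
      moreover have "card (f ` H P) = \<tau> P"
        using card_image[OF inj_on_subset[OF injf subset_UNIV]] deal P unfolding is_deal_def by simp
      ultimately show False using ci tauP P1 by fastforce
    qed
  qed
  have V2: "?W - f ` H' 0 = hyperplane d a b" using VV V by simp
  have fsub: "f ` A \<subseteq> ?W" for A using imf by auto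
  show "H' = H"
  proof
    fix k
    show "H' k = H k"
    proof (cases "k = 0")
      case True
      have "f ` H' 0 = f ` H 0"
      proof -
        have "f ` H' 0 = ?W - (?W - f ` H' 0)" using fsub[of "H' 0"] by auto
        also have "\<dots> = ?W - (?W - f ` H 0)" using VV by simp
        also have "\<dots> = f ` H 0" using fsub[of "H 0"] by auto
        finally show ?thesis .
      qed
      then show ?thesis using True injf by (simp add: inj_image_eq_iff)
    next
      case False
      show ?thesis
      proof (cases "k \<le> m")
        case True
        then have k1: "k \<in> {1..m}" using False by simp
        have a1: "f ` H k \<subseteq> hyperplane d a b" using sub_V[OF deal bf _ True] False V by simp
        have a2: "f ` H' k \<subseteq> hyperplane d a b" using sub_V[OF deal' bf _ True] False V2 by simp
        have "shift_proj d (hyperplane d a b) ` f ` H' k = shift_proj d (hyperplane d a b) ` f ` H k"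
          using Xd Xd' XX k1 V V2 ff by metis
        then have "f ` H' k = f ` H k"
          using inj_on_image_eq_iff[OF shift_inj[OF la d] a2 a1] by simp
        then show ?thesis using injf by (simp add: inj_image_eq_iff)
      next
        case False
        then show ?thesis using deal deal' unfolding is_deal_def by simp
      qed
    qed
  qed
qed

theorem mainTheorem9:
  fixes m d :: nat and \<tau> :: "nat \<Rightarrow> nat"
    and H :: "nat \<Rightarrow> 'c::finite set"
    and \<rho> :: "('c, 'f::{field,finite}) token list"
  assumes "suitable m (card (UNIV :: 'f set)) d \<tau>"
    and "card (UNIV :: 'c set) = tau_total m \<tau>"
    and "terminal m d \<tau> H \<rho>"
    and "P \<le> m"
  shows "\<not> (\<exists>H'. execution m d \<tau> H' \<rho> \<and> H' \<noteq> H \<and> H' P = H P)"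
proof
  assume "\<exists>H'. execution m d \<tau> H' \<rho> \<and> H' \<noteq> H \<and> H' P = H P"
  then obtain H' where e': "execution m d \<tau> H' \<rho>" and ne: "H' \<noteq> H" and hp: "H' P = H P" by blast
  have deal: "is_deal m \<tau> H" using assms(3) by (simp add: terminal_def execution_def)
  have "\<rho> \<noteq> []"
  proof
    assume rn: "\<rho> = []"
    obtain \<sigma> :: "('c, 'f) token list" where ms: "max_exec m d \<tau> H \<sigma>"
      using exists_max[OF assms(1,2) deal] by blast
    then obtain a r where "\<sigma> = a # r" using max_len[OF ms] by (cases \<sigma>) auto
    then have "a \<in> Pi m d \<tau> H []" using ms by (auto simp: Pi_def)
    then show False using assms(3) rn by (simp add: terminal_def)
  qed
  then have M: "max_exec m d \<tau> H \<rho>" using term_max[OF assms(3)] by simp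
  have M': "max_exec m d \<tau> H' \<rho>" using exec_max[OF e' max_len[OF M]] .
  have "H' = H" by (rule core[OF assms(1) M M' assms(4) hp])
  then show False using ne by simp
qed

end
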